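(* Let $X_n=(\mathbb{C}^n,\|\cdot\|)$ be a Banach space and let $J\subset\mathbb{N}_0^n$ be an index set of degree at most $m$. Then $$\max_{0\le k\le m}\boldsymbol{\lambda}\big(\mathcal{P}_{J(k)}(X_n)\big)\le\boldsymbol{\lambda}\big(\mathcal{P}_J(X_n)\big)\le(m+1)\max_{0\le k\le m}\boldsymbol{\lambda}\big(\mathcal{P}_{J(k)}(X_n)\big).$$ In particular, for any Banach sequence lattice $X$, $$\lim_{m\to\infty}\sup_{n\in\mathbb{N}}\frac{\boldsymbol{\lambda}\big(\mathcal{P}_{\le m}(X_n)\big)^{1/m}}{\big(\max_{0\le k\le m}\boldsymbol{\lambda}(\mathcal{P}_k(X_n))\big)^{1/m}}=1.$$
   Context: $J(k)=\{\alpha\in J:|\alpha|=k\}$; $J$ has degree at most $m$ if $|\alpha|\le m$ for all $\alpha\in J$. $\mathcal{P}_J(X_n)$ is the space of polynomials $\sum_{\alpha\in J}c_\alpha z^\alpha$ on $\mathbb{C}^n$ with norm $\sup_{z\in B_{X_n}}|P(z)|$, $B_{X_n}$ the open unit ball; $\mathcal{P}_{\le m}$ and $\mathcal{P}_k$ correspond to $J=\{|\alpha|\le m\}$ and $J=\{|\alpha|=k\}$. $\boldsymbol{\lambda}$ is the projection constant. For a Banach sequence lattice $X$ (Banach space of complex sequences with the ideal property), $X_n$ is $\mathbb{C}^n$ with $\|z\|=\|\sum_{k\le n}|z_k|e_k\|_X$. *)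

theory Defs
  imports "HOL-Analysis.Analysis"
begin

text \<open>Points of C^n are modelled as functions nat => complex vanishing at indices >= n
  (coordinates 0..n-1); multi-indices in N_0^n as functions nat => nat vanishing at >= n.\<close>

definition Cn :: "nat \<Rightarrow> (nat \<Rightarrow> complex) set" where
  "Cn n = {z. \<forall>i\<ge>n. z i = 0}"

definition mindex :: "nat \<Rightarrow> (nat \<Rightarrow> nat) set" where
  "mindex n = {\<alpha>. \<forall>i\<ge>n. \<alpha> i = 0}"

definition mdeg :: "nat \<Rightarrow> (nat \<Rightarrow> nat) \<Rightarrow> nat" where
  "mdeg n \<alpha> = (\<Sum>i<n. \<alpha> i)"

definition monom :: "nat \<Rightarrow> (nat \<Rightarrow> nat) \<Rightarrow> (nat \<Rightarrow> complex) \<Rightarrow> complex" where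
  "monom n \<alpha> z = (\<Prod>i<n. z i ^ \<alpha> i)"

definition Jk :: "nat \<Rightarrow> (nat \<Rightarrow> nat) set \<Rightarrow> nat \<Rightarrow> (nat \<Rightarrow> nat) set" where
  "Jk n J k = {\<alpha> \<in> J. mdeg n \<alpha> = k}"

definition norm_on :: "nat \<Rightarrow> ((nat \<Rightarrow> complex) \<Rightarrow> real) \<Rightarrow> bool" where
  "norm_on n N \<longleftrightarrow>
     (\<forall>z\<in>Cn n. N z = 0 \<longleftrightarrow> z = (\<lambda>i. 0)) \<and>
     (\<forall>z\<in>Cn n. \<forall>c. N (\<lambda>i. c * z i) = cmod c * N z) \<and>
     (\<forall>z\<in>Cn n. \<forall>w\<in>Cn n. N (\<lambda>i. z i + w i) \<le> N z + N w)"

definition unit_ball :: "nat \<Rightarrow> ((nat \<Rightarrow> complex) \<Rightarrow> real) \<Rightarrow> (nat \<Rightarrow> complex) set" where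
  "unit_ball n N = {z \<in> Cn n. N z < 1}"

text \<open>l_infty(B): bounded functions on B (extended by 0 outside B), with the sup norm.\<close>
definition linfty :: "'a set \<Rightarrow> ('a \<Rightarrow> complex) set" where
  "linfty B = {f. (\<forall>z. z \<notin> B \<longrightarrow> f z = 0) \<and> bounded (f ` B)}"

definition supnorm :: "'a set \<Rightarrow> ('a \<Rightarrow> complex) \<Rightarrow> real" where
  "supnorm B f = (SUP z\<in>B. cmod (f z))"

text \<open>P_J(X_n), isometrically realised inside l_infty(B_{X_n}) by restriction to the open unit ball
  (its norm is by definition the sup norm over the ball).\<close>
definition poly_space :: "nat \<Rightarrow> ((nat \<Rightarrow> complex) \<Rightarrow> real) \<Rightarrow> (nat \<Rightarrow> nat) set
    \<Rightarrow> ((nat \<Rightarrow> complex) \<Rightarrow> complex) set" where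
  "poly_space n N J = {f. \<exists>c. \<forall>z. f z =
      (if z \<in> unit_ball n N then (\<Sum>\<alpha>\<in>J. c \<alpha> * monom n \<alpha> z) else 0)}"

text \<open>Since l_infty(B) is injective and Y
  sits isometrically in it, this equals the (absolute) projection constant of Y.\<close>
definition proj_const :: "'a set \<Rightarrow> ('a \<Rightarrow> complex) set \<Rightarrow> real" where
  "proj_const B Y = Inf {C. 0 \<le> C \<and> (\<exists>Q.
      (\<forall>f\<in>linfty B. Q f \<in> Y) \<and>
      (\<forall>f\<in>linfty B. \<forall>g\<in>linfty B. Q (\<lambda>z. f z + g z) = (\<lambda>z. Q f z + Q g z)) \<and>
      (\<forall>f\<in>linfty B. \<forall>c. Q (\<lambda>z. c * f z) = (\<lambda>z. c * Q f z)) \<and>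
      (\<forall>y\<in>Y. Q y = y) \<and>
      (\<forall>f\<in>linfty B. supnorm B (Q f) \<le> C * supnorm B f))}"

definition lambdaP :: "nat \<Rightarrow> ((nat \<Rightarrow> complex) \<Rightarrow> real) \<Rightarrow> (nat \<Rightarrow> nat) set \<Rightarrow> real" where
  "lambdaP n N J = proj_const (unit_ball n N) (poly_space n N J)"

definition banach_seq_lattice :: "(nat \<Rightarrow> complex) set \<Rightarrow> ((nat \<Rightarrow> complex) \<Rightarrow> real) \<Rightarrow> bool" where
  "banach_seq_lattice X NX \<longleftrightarrow>
     (\<lambda>i. 0) \<in> X \<and>
     (\<forall>x\<in>X. \<forall>y\<in>X. (\<lambda>i. x i + y i) \<in> X) \<and>
     (\<forall>x\<in>X. \<forall>c. (\<lambda>i. c * x i) \<in> X) \<and>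
     (\<forall>x\<in>X. NX x = 0 \<longleftrightarrow> x = (\<lambda>i. 0)) \<and>
     (\<forall>x\<in>X. \<forall>c. NX (\<lambda>i. c * x i) = cmod c * NX x) \<and>
     (\<forall>x\<in>X. \<forall>y\<in>X. NX (\<lambda>i. x i + y i) \<le> NX x + NX y) \<and>
     (\<forall>s. (\<forall>k. s k \<in> X) \<and> (\<forall>e>0. \<exists>M. \<forall>p\<ge>M. \<forall>q\<ge>M. NX (\<lambda>i. s p i - s q i) < e)
          \<longrightarrow> (\<exists>x\<in>X. (\<lambda>k. NX (\<lambda>i. s k i - x i)) \<longlonglongrightarrow> 0)) \<and>
     (\<forall>x\<in>X. \<forall>y. (\<forall>i. cmod (y i) \<le> cmod (x i)) \<longrightarrow> y \<in> X \<and> NX y \<le> NX x) \<and>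
     (\<forall>k. (\<lambda>i. if i = k then 1 else 0) \<in> X)"

definition Xn_norm :: "((nat \<Rightarrow> complex) \<Rightarrow> real) \<Rightarrow> nat \<Rightarrow> (nat \<Rightarrow> complex) \<Rightarrow> real" where
  "Xn_norm NX n z = NX (\<lambda>k. if k < n then complex_of_real (cmod (z k)) else 0)"

definition Ple :: "nat \<Rightarrow> nat \<Rightarrow> (nat \<Rightarrow> nat) set" where
  "Ple n m = {\<alpha> \<in> mindex n. mdeg n \<alpha> \<le> m}"

definition Peq :: "nat \<Rightarrow> nat \<Rightarrow> (nat \<Rightarrow> nat) set" where
  "Peq n k = {\<alpha> \<in> mindex n. mdeg n \<alpha> = k}"

end

theory Submission
  imports Defs
begin

definition ev :: "nat \<Rightarrow> nat \<Rightarrow> nat \<Rightarrow> complex" where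
  "ev n k = (\<lambda>i. if i = k then 1 else 0)"

definition trunc :: "nat \<Rightarrow> (nat \<Rightarrow> complex) \<Rightarrow> nat \<Rightarrow> complex" where
  "trunc k z = (\<lambda>i. if i < k then z i else 0)"

lemma norm_on_tri:
  assumes "norm_on n N" "z \<in> Cn n" "w \<in> Cn n"
  shows "N (\<lambda>i. z i + w i) \<le> N z + N w"
  using assms unfolding norm_on_def by blast

lemma norm_on_hom:
  assumes "norm_on n N" "z \<in> Cn n"
  shows "N (\<lambda>i. c * z i) = cmod c * N z"
  using assms unfolding norm_on_def by blast

lemma norm_on_zero:
  assumes "norm_on n N" shows "N (\<lambda>i. 0) = 0"
  using assms unfolding norm_on_def Cn_def by auto

lemma norm_on_sub:
  assumes "norm_on n N" "k \<le> n" "z \<in> Cn n"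
  shows "N (trunc k z) \<le> (\<Sum>i<k. cmod (z i) * N (ev n i))"
  using assms(2)
proof (induction k)
  case 0
  then show ?case using norm_on_zero[OF assms(1)] by (simp add: trunc_def)
next
  case (Suc k)
  have eq: "trunc (Suc k) z = (\<lambda>i. trunc k z i + (z k * ev n k i))"
    by (rule ext) (auto simp: trunc_def ev_def less_Suc_eq)
  have c1: "trunc k z \<in> Cn n" using assms(3) Suc.prems by (auto simp: trunc_def Cn_def)
  have c2: "ev n k \<in> Cn n" using Suc.prems by (auto simp: ev_def Cn_def)
  have c3: "(\<lambda>i. z k * ev n k i) \<in> Cn n" using c2 by (auto simp: Cn_def)
  have "N (trunc (Suc k) z) \<le> N (trunc k z) + N (\<lambda>i. z k * ev n k i)"
    unfolding eq using norm_on_tri[OF assms(1) c1 c3] by simp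
  also have "N (\<lambda>i. z k * ev n k i) = cmod (z k) * N (ev n k)"
    using norm_on_hom[OF assms(1) c2] .
  finally show ?case using Suc by simp
qed

lemma norm_on_upper:
  assumes "norm_on n N" "z \<in> Cn n"
  shows "N z \<le> (\<Sum>i<n. cmod (z i) * N (ev n i))"
proof -
  have "trunc n z = z" using assms(2) by (auto simp: trunc_def Cn_def)
  then show ?thesis using norm_on_sub[OF assms(1) order_refl assms(2)] by simp
qed

lemma norm_on_nonneg:
  assumes "norm_on n N" "z \<in> Cn n" shows "N z \<ge> 0"
proof -
  have m: "(\<lambda>i. - z i) \<in> Cn n" using assms(2) by (auto simp: Cn_def)
  have "N (\<lambda>i. z i + - z i) \<le> N z + N (\<lambda>i. - z i)"
    using norm_on_tri[OF assms m] .
  moreover have "N (\<lambda>i. (-1) * z i) = N z" using norm_on_hom[OF assms, of "-1"] by simp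
  ultimately show ?thesis using norm_on_zero[OF assms(1)] by simp
qed

lemma norm_on_lower:
  assumes "norm_on n N"
  shows "\<exists>c>0. \<forall>z\<in>Cn n. c * (\<Sum>i<n. cmod (z i)) \<le> N z"
proof (cases "n = 0")
  case True
  then show ?thesis using norm_on_nonneg[OF assms] by (intro exI[of _ 1]) auto
next
  case False
  define K where "K = (\<lambda>i::nat. if i < n then cball (0::complex) 1 else {0})"
  define S where "S = PiE UNIV K \<inter> {z. (\<Sum>i<n. cmod (z i)) = 1}"
  have "compactin (product_topology (\<lambda>i. euclidean) UNIV) (PiE UNIV K)"
    unfolding compactin_PiE by (auto simp: K_def)
  then have c1: "compact (PiE UNIV K)" by (simp add: euclidean_product_topology)
  have "continuous_on UNIV (\<lambda>z::nat\<Rightarrow>complex. \<Sum>i<n. cmod (z i))"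
    by (intro continuous_intros continuous_on_product_then_coordinatewise continuous_on_id)
  then have c2: "closed {z::nat\<Rightarrow>complex. (\<Sum>i<n. cmod (z i)) = 1}"
    by (intro closed_Collect_eq) auto
  have cS: "compact S" unfolding S_def using c1 c2 by (rule compact_Int_closed)
  have SCn: "S \<subseteq> Cn n"
  proof
    fix z assume "z \<in> S"
    then have zK: "z \<in> PiE UNIV K" by (simp add: S_def)
    have "z i = 0" if "i \<ge> n" for i
    proof -
      have "z i \<in> K i" using PiE_mem[OF zK] by simp
      then show ?thesis using that by (simp add: K_def)
    qed
    then show "z \<in> Cn n" unfolding Cn_def by blast
  qed
  have e0: "ev n 0 \<in> S"
  proof -
    have "(\<Sum>i<n. cmod (ev n 0 i)) = (\<Sum>i<n. if i = 0 then 1 else 0)"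
      by (rule sum.cong) (auto simp: ev_def)
    also have "\<dots> = 1" using False by simp
    finally have s1: "(\<Sum>i<n. cmod (ev n 0 i)) = 1" .
    have "ev n 0 i \<in> K i" for i using False by (auto simp: K_def ev_def)
    then have "ev n 0 \<in> PiE UNIV K" unfolding PiE_UNIV_domain by (rule Pi_I)
    then show ?thesis using s1 by (simp add: S_def)
  qed
  have cont: "continuous_on S N"
    unfolding continuous_on_def
  proof
    fix x assume xS: "x \<in> S"
    have xC: "x \<in> Cn n" using xS SCn by auto
    define g where "g = (\<lambda>z::nat\<Rightarrow>complex. \<Sum>i<n. cmod (z i - x i) * N (ev n i))"
    have "continuous_on UNIV g" unfolding g_def
      by (intro continuous_intros continuous_on_product_then_coordinatewise continuous_on_id)
    then have "(g \<longlongrightarrow> g x) (at x within S)"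
      by (meson UNIV_I continuous_on_def tendsto_within_subset top_greatest)
    then have g0: "(g \<longlongrightarrow> 0) (at x within S)" by (simp add: g_def)
    have bnd: "norm (N z - N x) \<le> g z" if zS: "z \<in> S" for z
    proof -
      have zC: "z \<in> Cn n" using zS SCn by auto
      have d1: "(\<lambda>i. z i - x i) \<in> Cn n" using zC xC by (auto simp: Cn_def)
      have d2: "(\<lambda>i. x i - z i) \<in> Cn n" using zC xC by (auto simp: Cn_def)
      have "N z = N (\<lambda>i. x i + (z i - x i))" by simp
      also have "\<dots> \<le> N x + N (\<lambda>i. z i - x i)" by (rule norm_on_tri[OF assms xC d1])
      also have "N (\<lambda>i. z i - x i) \<le> g z"
        using norm_on_upper[OF assms d1] by (simp add: g_def)
      finally have A: "N z - N x \<le> g z" by simp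
      have "N x = N (\<lambda>i. z i + (x i - z i))" by simp
      also have "\<dots> \<le> N z + N (\<lambda>i. x i - z i)" by (rule norm_on_tri[OF assms zC d2])
      also have "N (\<lambda>i. x i - z i) \<le> g z"
        using norm_on_upper[OF assms d2] by (simp add: g_def norm_minus_commute)
      finally have B: "N x - N z \<le> g z" by simp
      show ?thesis using A B by simp
    qed
    have "((\<lambda>z. N z - N x) \<longlongrightarrow> 0) (at x within S)"
      by (rule Lim_null_comparison[OF _ g0]) (use bnd in \<open>auto simp: eventually_at_filter\<close>)
    then show "(N \<longlongrightarrow> N x) (at x within S)" by (simp add: LIM_zero_iff)
  qed
  obtain x0 where x0: "x0 \<in> S" "\<And>y. y \<in> S \<Longrightarrow> N x0 \<le> N y"
    using continuous_attains_inf[OF cS _ cont] e0 by blast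
  have x0C: "x0 \<in> Cn n" using x0 SCn by auto
  have "x0 \<noteq> (\<lambda>i. 0)" using x0(1) by (auto simp: S_def)
  then have "N x0 \<noteq> 0" using assms x0C unfolding norm_on_def by blast
  then have cpos: "N x0 > 0" using norm_on_nonneg[OF assms x0C] by simp
  show ?thesis
  proof (intro exI[of _ "N x0"] conjI cpos ballI)
    fix z assume zC: "z \<in> Cn n"
    define s where "s = (\<Sum>i<n. cmod (z i))"
    show "N x0 * (\<Sum>i<n. cmod (z i)) \<le> N z"
    proof (cases "s = 0")
      case True
      then show ?thesis using norm_on_nonneg[OF assms zC] by (simp add: s_def)
    next
      case F: False
      have spos: "s > 0" using F by (simp add: s_def order_le_neq_trans[OF sum_nonneg] )
      define w where "w = (\<lambda>i. z i / complex_of_real s)"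
      have "w \<in> S"
      proof -
        have "cmod (z i) \<le> s" if "i < n" for i
          unfolding s_def by (rule member_le_sum) (use that in auto)
        then have "w i \<in> K i" for i
        proof (cases "i < n")
          case True
          then have "cmod (z i) / s \<le> 1" using \<open>\<And>i. i < n \<Longrightarrow> cmod (z i) \<le> s\<close> spos by simp
          then show ?thesis using True spos by (simp add: w_def K_def norm_divide)
        next
          case False
          then show ?thesis using zC by (simp add: w_def K_def Cn_def)
        qed
        then have "w \<in> PiE UNIV K" by (simp add: PiE_UNIV_domain Pi_def)
        moreover have "(\<Sum>i<n. cmod (w i)) = 1"
        proof -
          have "cmod (w i) = cmod (z i) / s" for i using spos by (simp add: w_def norm_divide)
          then have "(\<Sum>i<n. cmod (w i)) = (\<Sum>i<n. cmod (z i)) / s" by (simp add: sum_divide_distrib)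
          then show ?thesis using spos by (simp add: s_def[symmetric])
        qed
        ultimately show ?thesis by (simp add: S_def)
      qed
      have wC: "w \<in> Cn n" using \<open>w \<in> S\<close> SCn by auto
      have "z = (\<lambda>i. complex_of_real s * w i)" using spos by (auto simp: w_def)
      then have "N z = s * N w" using norm_on_hom[OF assms wC, of "complex_of_real s"] spos by simp
      moreover have "N x0 \<le> N w" using x0(2) \<open>w \<in> S\<close> by blast
      ultimately show ?thesis using spos by (simp add: s_def[symmetric] mult.commute)
    qed
  qed
qed

definition polyf :: "nat \<Rightarrow> ((nat \<Rightarrow> complex) \<Rightarrow> real) \<Rightarrow> ((nat \<Rightarrow> nat) \<Rightarrow> complex)
   \<Rightarrow> (nat \<Rightarrow> nat) set \<Rightarrow> (nat \<Rightarrow> complex) \<Rightarrow> complex" where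
  "polyf n N c J = (\<lambda>z. if z \<in> unit_ball n N then (\<Sum>\<alpha>\<in>J. c \<alpha> * monom n \<alpha> z) else 0)"

lemma poly_space_eq: "poly_space n N J = {f. \<exists>c. f = polyf n N c J}"
  unfolding poly_space_def polyf_def by (auto simp: fun_eq_iff)

lemma polyf_in: "polyf n N c J \<in> poly_space n N J"
  unfolding poly_space_eq by blast

lemma B_bounded:
  assumes "norm_on n N"
  shows "\<exists>R>0. \<forall>z\<in>unit_ball n N. \<forall>i. cmod (z i) \<le> R"
proof -
  obtain c where c: "c > 0" "\<And>z. z \<in> Cn n \<Longrightarrow> c * (\<Sum>i<n. cmod (z i)) \<le> N z"
    using norm_on_lower[OF assms] by blast
  show ?thesis
  proof (intro exI[of _ "1/c"] conjI ballI allI)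
    show "1/c > 0" using c by simp
    fix z i assume z: "z \<in> unit_ball n N"
    then have zC: "z \<in> Cn n" and "N z < 1" by (auto simp: unit_ball_def)
    then have s: "c * (\<Sum>i<n. cmod (z i)) < 1" using c(2)[OF zC] by simp
    show "cmod (z i) \<le> 1/c"
    proof (cases "i < n")
      case True
      have "cmod (z i) \<le> (\<Sum>i<n. cmod (z i))" by (rule member_le_sum) (use True in auto)
      then have "c * cmod (z i) \<le> c * (\<Sum>i<n. cmod (z i))" using c(1) by (simp add: mult_left_mono)
      then have "c * cmod (z i) \<le> 1" using s by linarith
      then show ?thesis using c(1) by (simp add: field_simps)
    next
      case False
      then show ?thesis using zC c(1) by (simp add: Cn_def)
    qed
  qed
qed

lemma small_in_B:
  assumes "norm_on n N"
  shows "\<exists>r>0. \<forall>z\<in>Cn n. (\<forall>i<n. cmod (z i) \<le> r) \<longrightarrow> z \<in> unit_ball n N"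
proof -
  define T where "T = (\<Sum>i<n. N (ev n i))"
  have evC: "ev n i \<in> Cn n" if "i < n" for i using that by (auto simp: ev_def Cn_def)
  have T0: "T \<ge> 0" unfolding T_def by (rule sum_nonneg) (use norm_on_nonneg[OF assms evC] in auto)
  show ?thesis
  proof (intro exI[of _ "1/(T+1)"] conjI ballI impI)
    show "1/(T+1) > 0" using T0 by simp
    fix z assume zC: "z \<in> Cn n" and zs: "\<forall>i<n. cmod (z i) \<le> 1/(T+1)"
    have "N z \<le> (\<Sum>i<n. cmod (z i) * N (ev n i))" by (rule norm_on_upper[OF assms zC])
    also have "\<dots> \<le> (\<Sum>i<n. 1/(T+1) * N (ev n i))"
      by (rule sum_mono, rule mult_right_mono) (use zs norm_on_nonneg[OF assms evC] in auto)
    also have "\<dots> = T / (T+1)" unfolding T_def by (simp add: sum_divide_distrib)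
    also have "\<dots> < 1" using T0 by simp
    finally show "z \<in> unit_ball n N" using zC by (simp add: unit_ball_def)
  qed
qed

lemma zero_in_B: "norm_on n N \<Longrightarrow> (\<lambda>i. 0) \<in> unit_ball n N"
  using norm_on_zero[of n N] by (simp add: unit_ball_def Cn_def)

lemma circ_B:
  assumes "norm_on n N" "cmod c = 1"
  shows "(\<lambda>i. c * z i) \<in> unit_ball n N \<longleftrightarrow> z \<in> unit_ball n N"
proof -
  have c0: "c \<noteq> 0" using assms(2) by auto
  have "(\<lambda>i. c * z i) \<in> Cn n \<longleftrightarrow> z \<in> Cn n" using c0 by (auto simp: Cn_def)
  moreover have "z \<in> Cn n \<Longrightarrow> N (\<lambda>i. c * z i) = N z" using norm_on_hom[OF assms(1)] assms(2) by simp
  ultimately show ?thesis by (auto simp: unit_ball_def)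
qed

lemma monom_scale: "monom n \<alpha> (\<lambda>i. c * z i) = c ^ mdeg n \<alpha> * monom n \<alpha> z"
  by (simp add: monom_def mdeg_def power_mult_distrib prod.distrib power_sum)

lemma monom_bound:
  assumes "\<forall>i. cmod (z i) \<le> R"
  shows "cmod (monom n \<alpha> z) \<le> R ^ mdeg n \<alpha>"
proof -
  have "cmod (monom n \<alpha> z) = (\<Prod>i<n. cmod (z i) ^ \<alpha> i)" by (simp add: monom_def prod_norm[symmetric] norm_power)
  also have "\<dots> \<le> (\<Prod>i<n. R ^ \<alpha> i)"
    by (rule prod_mono) (use assms in \<open>auto intro: power_mono\<close>)
  also have "\<dots> = R ^ mdeg n \<alpha>" by (simp add: mdeg_def power_sum)
  finally show ?thesis .
qed

lemma finite_J:
  assumes "J \<subseteq> mindex n" "\<forall>\<alpha>\<in>J. mdeg n \<alpha> \<le> m"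
  shows "finite J"
proof -
  have le: "\<alpha> i \<le> m" if "\<alpha> \<in> J" "i < n" for \<alpha> i
  proof -
    have "\<alpha> i \<le> mdeg n \<alpha>" unfolding mdeg_def by (rule member_le_sum) (use that in auto)
    then show ?thesis using assms(2) that by force
  qed
  have inj: "inj_on (\<lambda>\<alpha>. map \<alpha> [0..<n]) J"
  proof (rule inj_onI)
    fix a b assume ab: "a \<in> J" "b \<in> J" "map a [0..<n] = map b [0..<n]"
    have "a i = b i" for i
    proof (cases "i < n")
      case True
      then show ?thesis using ab(3) by (simp add: map_eq_conv)
    next
      case False
      then have "i \<ge> n" by simp
      moreover have "a \<in> mindex n" "b \<in> mindex n" using assms(1) ab(1,2) by auto
      ultimately show ?thesis by (simp add: mindex_def)
    qed
    then show "a = b" by auto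
  qed
  have "(\<lambda>\<alpha>. map \<alpha> [0..<n]) ` J \<subseteq> {xs. set xs \<subseteq> {..m} \<and> length xs = n}"
    using le by auto
  moreover have "finite {xs. set xs \<subseteq> {..m} \<and> length xs = n}"
    by (rule finite_lists_length_eq) simp
  ultimately show ?thesis using inj finite_imageD finite_subset by metis
qed

lemma bounded_bnd: "bounded (f ` B) \<longleftrightarrow> (\<exists>K. \<forall>z\<in>B. cmod (f z) \<le> K)"
  unfolding bounded_iff by auto

lemma poly_bounded:
  assumes "norm_on n N" "finite J"
  shows "\<exists>K. \<forall>z\<in>unit_ball n N. cmod (polyf n N c J z) \<le> K"
proof -
  obtain R where R: "R > 0" "\<forall>z\<in>unit_ball n N. \<forall>i. cmod (z i) \<le> R"
    using B_bounded[OF assms(1)] by blast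
  show ?thesis
  proof (intro exI ballI)
    fix z assume z: "z \<in> unit_ball n N"
    have "cmod (polyf n N c J z) \<le> (\<Sum>\<alpha>\<in>J. cmod (c \<alpha> * monom n \<alpha> z))"
      using z by (simp add: polyf_def norm_sum)
    also have "\<dots> \<le> (\<Sum>\<alpha>\<in>J. cmod (c \<alpha>) * R ^ mdeg n \<alpha>)"
    proof (rule sum_mono)
      fix \<alpha> assume "\<alpha> \<in> J"
      have "cmod (monom n \<alpha> z) \<le> R ^ mdeg n \<alpha>" using monom_bound R(2) z by blast
      then show "cmod (c \<alpha> * monom n \<alpha> z) \<le> cmod (c \<alpha>) * R ^ mdeg n \<alpha>"
        by (simp add: norm_mult mult_left_mono)
    qed
    finally show "cmod (polyf n N c J z) \<le> (\<Sum>\<alpha>\<in>J. cmod (c \<alpha>) * R ^ mdeg n \<alpha>)" .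
  qed
qed

lemma poly_in_linfty:
  assumes "norm_on n N" "finite J" "y \<in> poly_space n N J"
  shows "y \<in> linfty (unit_ball n N)"
proof -
  obtain c where y: "y = polyf n N c J" using assms(3) unfolding poly_space_eq by blast
  show ?thesis using poly_bounded[OF assms(1,2), of c] unfolding linfty_def bounded_bnd y
    by (auto simp: polyf_def)
qed

definition om :: "nat \<Rightarrow> complex" where
  "om d = exp (2 * of_real pi * \<i> / of_nat d)"

lemma om_pow: "om d ^ t = exp (2 * of_real pi * \<i> * of_nat t / of_nat d)"
  unfolding om_def by (simp add: exp_of_nat_mult[symmetric] field_simps)

lemma norm_om_pow: "cmod (om d ^ t) = 1"
  unfolding om_pow by (simp add: norm_exp_eq_Re)

lemma rou_sum:
  assumes "d \<ge> 1"
  shows "(\<Sum>j<d. om d ^ (j * t)) = (if d dvd t then of_nat d else 0)"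
proof -
  have eq: "om d ^ (j * t) = (om d ^ t) ^ j" for j by (simp add: power_mult[symmetric] mult.commute)
  have "om d ^ d = 1" using complex_root_unity_eq_1[OF assms, of d] by (simp add: om_pow)
  then have pd: "(om d ^ t) ^ d = 1" by (metis power_mult mult.commute power_one)
  show ?thesis
  proof (cases "d dvd t")
    case True
    then have "om d ^ t = 1" using complex_root_unity_eq_1[OF assms] by (simp add: om_pow)
    then show ?thesis using True by (simp add: eq)
  next
    case False
    then have ne: "om d ^ t \<noteq> 1" using complex_root_unity_eq_1[OF assms] by (simp add: om_pow)
    have "(\<Sum>j<d. (om d ^ t) ^ j) = (1 - (om d ^ t) ^ d) / (1 - om d ^ t)"
      using ne by (simp add: sum_gp_strict)
    then show ?thesis using False pd by (simp add: eq)
  qed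
qed

lemma sup_upper: "f \<in> linfty B \<Longrightarrow> z \<in> B \<Longrightarrow> cmod (f z) \<le> supnorm B f"
  unfolding supnorm_def linfty_def
  by (rule cSUP_upper) (auto simp: bounded_bnd bdd_above_def)

lemma sup_least: "B \<noteq> {} \<Longrightarrow> (\<And>z. z \<in> B \<Longrightarrow> cmod (g z) \<le> K) \<Longrightarrow> supnorm B g \<le> K"
  unfolding supnorm_def by (rule cSUP_least) auto

lemma sup_nonneg: "f \<in> linfty B \<Longrightarrow> B \<noteq> {} \<Longrightarrow> supnorm B f \<ge> 0"
  using sup_upper[of f B] by (meson all_not_in_conv norm_ge_zero order_trans)

definition Eop :: "nat \<Rightarrow> nat \<Rightarrow> ((nat\<Rightarrow>complex)\<Rightarrow>complex) \<Rightarrow> (nat\<Rightarrow>complex) \<Rightarrow> complex" where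
  "Eop d k f = (\<lambda>z. (\<Sum>j<d. om d ^ (j*(d-k)) * f (\<lambda>i. om d ^ j * z i)) / of_nat d)"

lemma Eop_add: "Eop d k (\<lambda>z. f z + g z) = (\<lambda>z. Eop d k f z + Eop d k g z)"
  unfolding Eop_def by (rule ext) (simp add: distrib_left sum.distrib add_divide_distrib)

lemma Eop_smult: "Eop d k (\<lambda>z. c * f z) = (\<lambda>z. c * Eop d k f z)"
  unfolding Eop_def by (rule ext) (simp add: sum_distrib_left mult.left_commute)

lemma Eop_out:
  assumes "norm_on n N" "f \<in> linfty (unit_ball n N)" "z \<notin> unit_ball n N"
  shows "Eop d k f z = 0"
proof -
  have "f (\<lambda>i. om d ^ j * z i) = 0" for j
    using assms circ_B[OF assms(1) norm_om_pow, of d j z] unfolding linfty_def by blast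
  then show ?thesis by (simp add: Eop_def)
qed

lemma Eop_bound:
  assumes "norm_on n N" "f \<in> linfty (unit_ball n N)" "z \<in> unit_ball n N" "d \<ge> 1"
  shows "cmod (Eop d k f z) \<le> supnorm (unit_ball n N) f"
proof -
  have "cmod (\<Sum>j<d. om d ^ (j*(d-k)) * f (\<lambda>i. om d ^ j * z i))
      \<le> (\<Sum>j<d. cmod (om d ^ (j*(d-k)) * f (\<lambda>i. om d ^ j * z i)))" by (rule norm_sum)
  also have "\<dots> \<le> (\<Sum>j<d. supnorm (unit_ball n N) f)"
  proof (rule sum_mono)
    fix j
    have "(\<lambda>i. om d ^ j * z i) \<in> unit_ball n N"
      using circ_B[OF assms(1) norm_om_pow, of d j z] assms(3) by blast
    then show "cmod (om d ^ (j*(d-k)) * f (\<lambda>i. om d ^ j * z i)) \<le> supnorm (unit_ball n N) f"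
      using sup_upper[OF assms(2)] by (simp add: norm_mult norm_om_pow)
  qed
  also have "\<dots> = d * supnorm (unit_ball n N) f" by simp
  finally show ?thesis using assms(4) by (simp add: Eop_def norm_divide field_simps)
qed

lemma Eop_linfty:
  assumes "norm_on n N" "f \<in> linfty (unit_ball n N)" "d \<ge> 1"
  shows "Eop d k f \<in> linfty (unit_ball n N)"
  unfolding linfty_def bounded_bnd using Eop_out[OF assms(1,2)] Eop_bound[OF assms(1,2) _ assms(3)]
  by blast

lemma Eop_sup:
  assumes "norm_on n N" "f \<in> linfty (unit_ball n N)" "d \<ge> 1"
  shows "supnorm (unit_ball n N) (Eop d k f) \<le> supnorm (unit_ball n N) f"
  by (rule sup_least) (use zero_in_B[OF assms(1)] Eop_bound[OF assms(1,2) _ assms(3)] in auto)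

lemma dvd_range: assumes "0 < (x::nat)" "x < 2*d" "d dvd x" shows "x = d"
proof -
  obtain q where x: "x = d * q" using assms(3) by (auto elim: dvdE)
  have "q = 0 \<or> q = 1 \<or> q \<ge> 2" by arith
  moreover have "q \<ge> 2 \<Longrightarrow> d * 2 \<le> d * q" by simp
  ultimately show ?thesis using assms(1,2) x by auto
qed

lemma Eop_poly:
  assumes "norm_on n N" "finite J" "\<forall>\<alpha>\<in>J. mdeg n \<alpha> \<le> m" "k \<le> m"
  shows "Eop (Suc m) k (polyf n N c J) = polyf n N c (Jk n J k)"
proof (rule ext)
  fix z
  define d where "d = Suc m"
  define w where "w = om d"
  show "Eop (Suc m) k (polyf n N c J) z = polyf n N c (Jk n J k) z"
  proof (cases "z \<in> unit_ball n N")
    case False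
    have "polyf n N c J \<in> linfty (unit_ball n N)" by (rule poly_in_linfty[OF assms(1,2) polyf_in])
    then show ?thesis using Eop_out[OF assms(1) _ False] False by (simp add: polyf_def)
  next
    case True
    have inB: "(\<lambda>i. w ^ j * z i) \<in> unit_ball n N" for j
      using circ_B[OF assms(1) norm_om_pow, of d j z] True by (simp add: w_def)
    have key: "(\<Sum>j<d. w ^ (j * (d - k + mdeg n \<alpha>))) = (if mdeg n \<alpha> = k then of_nat d else 0)"
      if "\<alpha> \<in> J" for \<alpha>
    proof -
      have a: "mdeg n \<alpha> \<le> m" using assms(3) that by blast
      have "d dvd (d - k + mdeg n \<alpha>) \<longleftrightarrow> mdeg n \<alpha> = k"
      proof
        assume "d dvd (d - k + mdeg n \<alpha>)"
        then have "d - k + mdeg n \<alpha> = d" by (rule dvd_range[rotated 2]) (use a assms(4) d_def in auto)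
        then show "mdeg n \<alpha> = k" using assms(4) d_def by simp
      next
        assume "mdeg n \<alpha> = k" then show "d dvd (d - k + mdeg n \<alpha>)" using assms(4) d_def by simp
      qed
      then show ?thesis using rou_sum[of d "d - k + mdeg n \<alpha>"] d_def by (simp add: w_def)
    qed
    have "(\<Sum>j<d. w ^ (j*(d-k)) * polyf n N c J (\<lambda>i. w ^ j * z i))
        = (\<Sum>j<d. \<Sum>\<alpha>\<in>J. c \<alpha> * monom n \<alpha> z * w ^ (j * (d - k + mdeg n \<alpha>)))"
    proof (rule sum.cong[OF refl])
      fix j
      have "w ^ (j*(d-k)) * polyf n N c J (\<lambda>i. w ^ j * z i)
          = (\<Sum>\<alpha>\<in>J. w ^ (j*(d-k)) * (c \<alpha> * ((w ^ j) ^ mdeg n \<alpha> * monom n \<alpha> z)))"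
        using inB[of j] by (simp add: polyf_def monom_scale sum_distrib_left)
      also have "\<dots> = (\<Sum>\<alpha>\<in>J. c \<alpha> * monom n \<alpha> z * w ^ (j * (d - k + mdeg n \<alpha>)))"
        by (rule sum.cong[OF refl]) (simp add: power_mult[symmetric] power_add[symmetric] distrib_left mult_ac add.commute)
      finally show "w ^ (j*(d-k)) * polyf n N c J (\<lambda>i. w ^ j * z i)
          = (\<Sum>\<alpha>\<in>J. c \<alpha> * monom n \<alpha> z * w ^ (j * (d - k + mdeg n \<alpha>)))" .
    qed
    also have "\<dots> = (\<Sum>\<alpha>\<in>J. c \<alpha> * monom n \<alpha> z * (\<Sum>j<d. w ^ (j * (d - k + mdeg n \<alpha>))))"
      by (simp add: sum.swap[of _ J] sum_distrib_left)
    also have "\<dots> = (\<Sum>\<alpha>\<in>J. if mdeg n \<alpha> = k then c \<alpha> * monom n \<alpha> z * of_nat d else 0)"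
      by (rule sum.cong[OF refl]) (simp add: key)
    also have "\<dots> = (\<Sum>\<alpha>\<in>Jk n J k. c \<alpha> * monom n \<alpha> z) * of_nat d"
      unfolding Jk_def using assms(2) by (simp add: sum.inter_filter sum_distrib_right if_distrib[of "\<lambda>x. x * _"] cong: if_cong)
    finally have S: "(\<Sum>j<d. w ^ (j*(d-k)) * polyf n N c J (\<lambda>i. w ^ j * z i))
        = (\<Sum>\<alpha>\<in>Jk n J k. c \<alpha> * monom n \<alpha> z) * of_nat d" .
    have E: "Eop (Suc m) k (polyf n N c J) z
        = (\<Sum>j<d. w ^ (j*(d-k)) * polyf n N c J (\<lambda>i. w ^ j * z i)) / of_nat d"
      unfolding Eop_def d_def w_def by (rule refl)
    have dnz: "(of_nat d :: complex) \<noteq> 0" unfolding d_def by (metis of_nat_eq_0_iff nat.simps(3))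
    show ?thesis unfolding E S using dnz True by (simp add: polyf_def)
  qed
qed

lemma Jk_Jk: "Jk n (Jk n J k) k = Jk n J k"
  by (auto simp: Jk_def)

lemma poly_space_mono:
  assumes "J' \<subseteq> J" "finite J"
  shows "poly_space n N J' \<subseteq> poly_space n N J"
proof
  fix y assume "y \<in> poly_space n N J'"
  then obtain c where y: "y = polyf n N c J'" unfolding poly_space_eq by blast
  have eqs: "(\<Sum>\<alpha>\<in>J. (if \<alpha> \<in> J' then c \<alpha> else 0) * monom n \<alpha> z) = (\<Sum>\<alpha>\<in>J'. c \<alpha> * monom n \<alpha> z)" for z
  proof -
    have "(\<Sum>\<alpha>\<in>J. (if \<alpha> \<in> J' then c \<alpha> else 0) * monom n \<alpha> z)
        = (\<Sum>\<alpha>\<in>J. if \<alpha> \<in> J' then c \<alpha> * monom n \<alpha> z else 0)"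
      by (rule sum.cong) auto
    also have "\<dots> = (\<Sum>\<alpha>\<in>J \<inter> J'. c \<alpha> * monom n \<alpha> z)" using assms(2) by (rule sum.inter_restrict[symmetric])
    also have "J \<inter> J' = J'" using assms(1) by blast
    finally show ?thesis .
  qed
  have "y = polyf n N (\<lambda>\<alpha>. if \<alpha> \<in> J' then c \<alpha> else 0) J" unfolding y polyf_def by (simp only: eqs)
  then show "y \<in> poly_space n N J" using polyf_in by simp
qed

definition isproj :: "'a set \<Rightarrow> ('a \<Rightarrow> complex) set \<Rightarrow> (('a \<Rightarrow> complex) \<Rightarrow> ('a \<Rightarrow> complex)) \<Rightarrow> real \<Rightarrow> bool" where
  "isproj B Y Q C \<longleftrightarrow>
      (\<forall>f\<in>linfty B. Q f \<in> Y) \<and>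
      (\<forall>f\<in>linfty B. \<forall>g\<in>linfty B. Q (\<lambda>z. f z + g z) = (\<lambda>z. Q f z + Q g z)) \<and>
      (\<forall>f\<in>linfty B. \<forall>c. Q (\<lambda>z. c * f z) = (\<lambda>z. c * Q f z)) \<and>
      (\<forall>y\<in>Y. Q y = y) \<and>
      (\<forall>f\<in>linfty B. supnorm B (Q f) \<le> C * supnorm B f)"

definition PS :: "'a set \<Rightarrow> ('a \<Rightarrow> complex) set \<Rightarrow> real set" where
  "PS B Y = {C. 0 \<le> C \<and> (\<exists>Q. isproj B Y Q C)}"

lemma proj_const_PS: "proj_const B Y = Inf (PS B Y)"
  unfolding proj_const_def PS_def isproj_def by simp

lemma rou_delta:
  assumes "a < d" "b < d"
  shows "(\<Sum>t<d. om d ^ (t * (d - a + b))) = (if a = b then of_nat d else 0)"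
proof -
  have d1: "d \<ge> 1" using assms by simp
  have "d dvd (d - a + b) \<longleftrightarrow> a = b"
  proof
    assume "d dvd (d - a + b)"
    then have "d - a + b = d" by (rule dvd_range[rotated 2]) (use assms in auto)
    then show "a = b" using assms by simp
  qed (use assms in simp)
  then show ?thesis using rou_sum[OF d1, of "d - a + b"] by simp
qed

lemma ortho:
  fixes r :: real
  assumes "\<alpha> \<in> mindex n" "\<beta> \<in> mindex n" "\<forall>i<n. \<alpha> i < d \<and> \<beta> i < d"
  shows "(\<Sum>j\<in>PiE {..<n} (\<lambda>_. {..<d}). (\<Prod>i<n. om d ^ (j i * (d - \<alpha> i))) *
            monom n \<beta> (\<lambda>i. if i < n then of_real r * om d ^ j i else 0))
       = (if \<alpha> = \<beta> then of_nat d ^ n * of_real r ^ mdeg n \<beta> else 0)"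
proof -
  have m: "monom n \<beta> (\<lambda>i. if i < n then of_real r * om d ^ j i else 0)
      = of_real r ^ mdeg n \<beta> * (\<Prod>i<n. om d ^ (j i * \<beta> i))" for j
  proof -
    have "monom n \<beta> (\<lambda>i. if i < n then of_real r * om d ^ j i else 0)
        = (\<Prod>i<n. (of_real r * om d ^ j i) ^ \<beta> i)"
      unfolding monom_def by (rule prod.cong) auto
    also have "\<dots> = (\<Prod>i<n. of_real r ^ \<beta> i * om d ^ (j i * \<beta> i))"
      by (rule prod.cong[OF refl]) (simp add: power_mult_distrib power_mult)
    also have "\<dots> = of_real r ^ mdeg n \<beta> * (\<Prod>i<n. om d ^ (j i * \<beta> i))"
      by (simp add: prod.distrib mdeg_def power_sum)
    finally show ?thesis .
  qed
  have "(\<Sum>j\<in>PiE {..<n} (\<lambda>_. {..<d}). (\<Prod>i<n. om d ^ (j i * (d - \<alpha> i))) *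
            monom n \<beta> (\<lambda>i. if i < n then of_real r * om d ^ j i else 0))
      = of_real r ^ mdeg n \<beta> * (\<Sum>j\<in>PiE {..<n} (\<lambda>_. {..<d}). \<Prod>i<n. om d ^ (j i * (d - \<alpha> i + \<beta> i)))"
    unfolding m sum_distrib_left
  proof (rule sum.cong[OF refl])
    fix j
    have "(\<Prod>i<n. om d ^ (j i * (d - \<alpha> i))) * (\<Prod>i<n. om d ^ (j i * \<beta> i))
        = (\<Prod>i<n. om d ^ (j i * (d - \<alpha> i + \<beta> i)))"
      unfolding prod.distrib[symmetric]
      by (rule prod.cong[OF refl]) (simp add: power_add[symmetric] distrib_left)
    then show "(\<Prod>i<n. om d ^ (j i * (d - \<alpha> i))) * (of_real r ^ mdeg n \<beta> * (\<Prod>i<n. om d ^ (j i * \<beta> i)))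
        = of_real r ^ mdeg n \<beta> * (\<Prod>i<n. om d ^ (j i * (d - \<alpha> i + \<beta> i)))"
      by (simp add: mult_ac)
  qed
  also have "(\<Sum>j\<in>PiE {..<n} (\<lambda>_. {..<d}). \<Prod>i<n. om d ^ (j i * (d - \<alpha> i + \<beta> i)))
      = (\<Prod>i<n. \<Sum>t<d. om d ^ (t * (d - \<alpha> i + \<beta> i)))"
    by (rule prod_sum_PiE[symmetric]) auto
  also have "\<dots> = (\<Prod>i<n. if \<alpha> i = \<beta> i then of_nat d else 0)"
  proof (rule prod.cong[OF refl])
    fix i assume "i \<in> {..<n}"
    then have "\<alpha> i < d" "\<beta> i < d" using assms(3) by auto
    then show "(\<Sum>t<d. om d ^ (t * (d - \<alpha> i + \<beta> i))) = (if \<alpha> i = \<beta> i then of_nat d else 0)"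
      by (rule rou_delta)
  qed
  also have "\<dots> = (if \<alpha> = \<beta> then of_nat d ^ n else 0)"
  proof (cases "\<alpha> = \<beta>")
    case True then show ?thesis by simp
  next
    case False
    then obtain i where i: "\<alpha> i \<noteq> \<beta> i" by auto
    have "i < n"
    proof (rule ccontr)
      assume "\<not> i < n"
      then have "\<alpha> i = 0" "\<beta> i = 0" using assms(1,2) unfolding mindex_def by auto
      then show False using i by simp
    qed
    then have "(\<Prod>i<n. if \<alpha> i = \<beta> i then (of_nat d::complex) else 0) = 0"
      using i by (intro prod_zero) auto
    then show ?thesis using False by simp
  qed
  finally show ?thesis by simp
qed

lemma coef_poly:
  fixes r :: real
  assumes "finite J" "J \<subseteq> mindex n" "\<forall>\<alpha>\<in>J. \<forall>i<n. \<alpha> i < d" "\<alpha> \<in> J"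
    and inB: "\<And>j. j \<in> PiE {..<n} (\<lambda>_. {..<d}) \<Longrightarrow> (\<lambda>i. if i < n then of_real r * om d ^ j i else 0) \<in> unit_ball n N"
    and r: "r \<noteq> 0" and d: "d \<ge> 1"
  shows "(\<Sum>j\<in>PiE {..<n} (\<lambda>_. {..<d}). (\<Prod>i<n. om d ^ (j i * (d - \<alpha> i))) *
            polyf n N c J (\<lambda>i. if i < n then of_real r * om d ^ j i else 0))
         / (of_nat d ^ n * of_real r ^ mdeg n \<alpha>) = c \<alpha>"
proof -
  let ?P = "PiE {..<n} (\<lambda>_. {..<d})"
  let ?pt = "\<lambda>j. (\<lambda>i. if i < n then of_real r * om d ^ j i else 0)"
  have "(\<Sum>j\<in>?P. (\<Prod>i<n. om d ^ (j i * (d - \<alpha> i))) * polyf n N c J (?pt j))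
      = (\<Sum>j\<in>?P. \<Sum>\<beta>\<in>J. c \<beta> * ((\<Prod>i<n. om d ^ (j i * (d - \<alpha> i))) * monom n \<beta> (?pt j)))"
    by (rule sum.cong[OF refl]) (simp add: inB polyf_def sum_distrib_left mult_ac)
  also have "\<dots> = (\<Sum>\<beta>\<in>J. c \<beta> * (\<Sum>j\<in>?P. (\<Prod>i<n. om d ^ (j i * (d - \<alpha> i))) * monom n \<beta> (?pt j)))"
    by (simp add: sum.swap[of _ ?P] sum_distrib_left)
  also have "\<dots> = (\<Sum>\<beta>\<in>J. c \<beta> * (if \<alpha> = \<beta> then of_nat d ^ n * of_real r ^ mdeg n \<beta> else 0))"
  proof (rule sum.cong[OF refl])
    fix \<beta> assume b: "\<beta> \<in> J"
    show "c \<beta> * (\<Sum>j\<in>?P. (\<Prod>i<n. om d ^ (j i * (d - \<alpha> i))) * monom n \<beta> (?pt j))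
        = c \<beta> * (if \<alpha> = \<beta> then of_nat d ^ n * of_real r ^ mdeg n \<beta> else 0)"
    proof -
      have h: "\<alpha> \<in> mindex n" "\<beta> \<in> mindex n" "\<forall>i<n. \<alpha> i < d \<and> \<beta> i < d"
        using assms(2,3,4) b by auto
      show ?thesis using ortho[OF h, of r] by simp
    qed
  qed
  also have "\<dots> = c \<alpha> * (of_nat d ^ n * of_real r ^ mdeg n \<alpha>)"
    using assms(1,4) by (simp add: if_distrib[of "\<lambda>x. c _ * x"] sum.delta cong: if_cong)
  finally show ?thesis using r d by simp
qed

lemma proj_exists:
  assumes nN: "norm_on n N" and J: "J \<subseteq> mindex n" "\<forall>\<alpha>\<in>J. mdeg n \<alpha> \<le> m"
  shows "\<exists>C Q. 0 \<le> C \<and> isproj (unit_ball n N) (poly_space n N J) Q C"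
proof -
  define B where "B = unit_ball n N"
  have fJ: "finite J" by (rule finite_J[OF J])
  define d where "d = Suc m"
  have d1: "d \<ge> 1" by (simp add: d_def)
  have lt: "\<forall>\<alpha>\<in>J. \<forall>i<n. \<alpha> i < d"
  proof (intro ballI allI impI)
    fix \<alpha> i assume a: "\<alpha> \<in> J" "i < n"
    have "\<alpha> i \<le> mdeg n \<alpha>" unfolding mdeg_def by (rule member_le_sum) (use a in auto)
    then show "\<alpha> i < d" using J(2) a d_def by force
  qed
  obtain r where r: "r > 0" "\<forall>z\<in>Cn n. (\<forall>i<n. cmod (z i) \<le> r) \<longrightarrow> z \<in> unit_ball n N"
    using small_in_B[OF nN] by blast
  obtain R where R: "R > 0" "\<forall>z\<in>unit_ball n N. \<forall>i. cmod (z i) \<le> R"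
    using B_bounded[OF nN] by blast
  define P where "P = PiE {..<n} (\<lambda>_::nat. {..<d})"
  have fP: "finite P" unfolding P_def by (rule finite_PiE) auto
  define pt where "pt = (\<lambda>j::nat\<Rightarrow>nat. (\<lambda>i. if i < n then of_real r * om d ^ j i else 0))"
  have inB: "pt j \<in> unit_ball n N" for j
  proof -
    have "pt j \<in> Cn n" by (simp add: pt_def Cn_def)
    moreover have "\<forall>i<n. cmod (pt j i) \<le> r" using r(1) by (simp add: pt_def norm_mult norm_om_pow)
    ultimately show ?thesis using r(2) by blast
  qed
  define wt where "wt = (\<lambda>\<alpha> j. \<Prod>i<n. om d ^ (j i * (d - \<alpha> i)))"
  have nwt: "cmod (wt \<alpha> j) = 1" for \<alpha> j
    by (simp add: wt_def prod_norm[symmetric] norm_om_pow)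
  define coef where "coef = (\<lambda>\<alpha> f. (\<Sum>j\<in>P. wt \<alpha> j * f (pt j)) / (of_nat d ^ n * of_real r ^ mdeg n \<alpha>))"
  define Q where "Q = (\<lambda>f. polyf n N (\<lambda>\<alpha>. coef \<alpha> f) J)"
  define K where "K = (\<lambda>\<alpha>. real (card P) / (real d ^ n * r ^ mdeg n \<alpha>))"
  define C where "C = (\<Sum>\<alpha>\<in>J. K \<alpha> * R ^ mdeg n \<alpha>)"
  have Bne: "B \<noteq> {}" using zero_in_B[OF nN] B_def by auto
  have K0: "K \<alpha> \<ge> 0" for \<alpha> using r(1) by (simp add: K_def)
  have C0: "C \<ge> 0" unfolding C_def using K0 R(1) by (intro sum_nonneg) simp
  have coef_add: "coef \<alpha> (\<lambda>z. f z + g z) = coef \<alpha> f + coef \<alpha> g" for \<alpha> f g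
    unfolding coef_def by (simp add: distrib_left sum.distrib add_divide_distrib)
  have coef_smult: "coef \<alpha> (\<lambda>z. c * f z) = c * coef \<alpha> f" for \<alpha> f c
    unfolding coef_def by (simp add: sum_distrib_left mult.left_commute)
  have coef_bnd: "cmod (coef \<alpha> f) \<le> K \<alpha> * supnorm B f" if f: "f \<in> linfty B" for \<alpha> f
  proof -
    have "cmod (\<Sum>j\<in>P. wt \<alpha> j * f (pt j)) \<le> (\<Sum>j\<in>P. cmod (wt \<alpha> j * f (pt j)))" by (rule norm_sum)
    also have "\<dots> \<le> (\<Sum>j\<in>P. supnorm B f)"
      by (rule sum_mono) (use sup_upper[OF f] inB in \<open>simp add: norm_mult nwt B_def\<close>)
    also have "\<dots> = real (card P) * supnorm B f" by simp
    finally have h: "cmod (\<Sum>j\<in>P. wt \<alpha> j * f (pt j)) \<le> real (card P) * supnorm B f" .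
    have pos: "real d ^ n * r ^ mdeg n \<alpha> > 0" using r(1) d1 by simp
    have "cmod (coef \<alpha> f) = cmod (\<Sum>j\<in>P. wt \<alpha> j * f (pt j)) / (real d ^ n * r ^ mdeg n \<alpha>)"
      unfolding coef_def using r(1) by (simp add: norm_divide norm_mult norm_power)
    also have "\<dots> \<le> real (card P) * supnorm B f / (real d ^ n * r ^ mdeg n \<alpha>)"
      by (rule divide_right_mono[OF h]) (use pos in simp)
    also have "\<dots> = K \<alpha> * supnorm B f" by (simp add: K_def)
    finally show ?thesis .
  qed
  have "isproj B (poly_space n N J) Q C"
    unfolding isproj_def
  proof (intro conjI ballI allI)
    fix f assume "f \<in> linfty B"
    show "Q f \<in> poly_space n N J" unfolding Q_def by (rule polyf_in)
  next
    fix f g assume "f \<in> linfty B" "g \<in> linfty B"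
    show "Q (\<lambda>z. f z + g z) = (\<lambda>z. Q f z + Q g z)"
      unfolding Q_def polyf_def coef_add by (rule ext) (simp add: distrib_right sum.distrib)
  next
    fix f c assume "f \<in> linfty B"
    show "Q (\<lambda>z. c * f z) = (\<lambda>z. c * Q f z)"
      unfolding Q_def polyf_def coef_smult by (rule ext) (simp add: sum_distrib_left mult.assoc)
  next
    fix y assume "y \<in> poly_space n N J"
    then obtain c where y: "y = polyf n N c J" unfolding poly_space_eq by blast
    have "coef \<alpha> y = c \<alpha>" if "\<alpha> \<in> J" for \<alpha>
      unfolding coef_def wt_def y P_def pt_def
      by (rule coef_poly[OF fJ J(1) lt that _ _ d1]) (use inB r(1) in \<open>auto simp: pt_def\<close>)
    then show "Q y = y" unfolding Q_def y polyf_def by (intro ext) (simp cong: sum.cong)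
  next
    fix f assume f: "f \<in> linfty B"
    show "supnorm B (Q f) \<le> C * supnorm B f"
    proof (rule sup_least)
      show "B \<noteq> {}" using zero_in_B[OF nN] B_def by auto
    next
      fix z assume z: "z \<in> B"
      have "cmod (Q f z) \<le> (\<Sum>\<alpha>\<in>J. cmod (coef \<alpha> f * monom n \<alpha> z))"
        using z by (simp add: Q_def polyf_def B_def norm_sum)
      also have "\<dots> \<le> (\<Sum>\<alpha>\<in>J. K \<alpha> * supnorm B f * R ^ mdeg n \<alpha>)"
      proof (rule sum_mono)
        fix \<alpha> assume "\<alpha> \<in> J"
        have m: "cmod (monom n \<alpha> z) \<le> R ^ mdeg n \<alpha>" using monom_bound R(2) z B_def by blast
        show "cmod (coef \<alpha> f * monom n \<alpha> z) \<le> K \<alpha> * supnorm B f * R ^ mdeg n \<alpha>"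
          unfolding norm_mult by (rule mult_mono[OF coef_bnd[OF f] m]) (use K0 sup_nonneg[OF f Bne] in auto)
      qed
      also have "\<dots> = (\<Sum>\<alpha>\<in>J. K \<alpha> * R ^ mdeg n \<alpha>) * supnorm B f"
        by (subst sum_distrib_right) (rule sum.cong, auto simp: mult_ac)
      also have "\<dots> = C * supnorm B f" by (simp add: C_def)
      finally show "cmod (Q f z) \<le> C * supnorm B f" .
    qed
  qed
  then show ?thesis using C0 B_def by blast
qed

lemma PS_ne:
  assumes "norm_on n N" "J \<subseteq> mindex n" "\<forall>\<alpha>\<in>J. mdeg n \<alpha> \<le> m"
  shows "PS (unit_ball n N) (poly_space n N J) \<noteq> {}"
  using proj_exists[OF assms] unfolding PS_def by blast

lemma PS_bdd: "bdd_below (PS B Y)"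
  unfolding PS_def bdd_below_def by auto

lemma Jk_sub: "Jk n J k \<subseteq> J" by (auto simp: Jk_def)

lemma Jk_props:
  assumes "J \<subseteq> mindex n" "\<forall>\<alpha>\<in>J. mdeg n \<alpha> \<le> m"
  shows "Jk n J k \<subseteq> mindex n" "\<forall>\<alpha>\<in>Jk n J k. mdeg n \<alpha> \<le> m"
  using assms Jk_sub[of n J k] by auto

lemma lower_one:
  assumes "norm_on n N" "J \<subseteq> mindex n" "\<forall>\<alpha>\<in>J. mdeg n \<alpha> \<le> m"
    and k: "k \<le> m"
  shows "lambdaP n N (Jk n J k) \<le> lambdaP n N J"
proof -
  define B where "B = unit_ball n N"
  have fJ: "finite J" by (rule finite_J[OF assms(2,3)])
  have fJk: "finite (Jk n J k)" using fJ Jk_sub finite_subset by metis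
  have sub: "PS B (poly_space n N J) \<subseteq> PS B (poly_space n N (Jk n J k))"
  proof
    fix C assume "C \<in> PS B (poly_space n N J)"
    then obtain Q where C0: "0 \<le> C" and Q: "isproj B (poly_space n N J) Q C" unfolding PS_def by blast
    define Q' where "Q' = (\<lambda>f. Eop (Suc m) k (Q f))"
    have "isproj B (poly_space n N (Jk n J k)) Q' C"
      unfolding isproj_def
    proof (intro conjI ballI allI)
      fix f assume f: "f \<in> linfty B"
      then have "Q f \<in> poly_space n N J" using Q unfolding isproj_def by blast
      then obtain c where "Q f = polyf n N c J" unfolding poly_space_eq by blast
      then show "Q' f \<in> poly_space n N (Jk n J k)"
        unfolding Q'_def using Eop_poly[OF assms(1) fJ assms(3) k] polyf_in by simp
    next
      fix f g assume "f \<in> linfty B" "g \<in> linfty B"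
      then show "Q' (\<lambda>z. f z + g z) = (\<lambda>z. Q' f z + Q' g z)"
        using Q unfolding isproj_def Q'_def by (simp add: Eop_add)
    next
      fix f c assume "f \<in> linfty B"
      then show "Q' (\<lambda>z. c * f z) = (\<lambda>z. c * Q' f z)"
        using Q unfolding isproj_def Q'_def by (simp add: Eop_smult)
    next
      fix y assume y: "y \<in> poly_space n N (Jk n J k)"
      then have "y \<in> poly_space n N J" using poly_space_mono[OF Jk_sub fJ] by blast
      then have Qy: "Q y = y" using Q unfolding isproj_def by blast
      obtain c where yc: "y = polyf n N c (Jk n J k)" using y unfolding poly_space_eq by blast
      have "Eop (Suc m) k y = polyf n N c (Jk n (Jk n J k) k)"
        unfolding yc by (rule Eop_poly[OF assms(1) fJk Jk_props(2)[OF assms(2,3)] k])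
      then have E: "Eop (Suc m) k y = y" unfolding Jk_Jk yc[symmetric] .
      show "Q' y = y" by (simp add: Q'_def Qy E)
    next
      fix f assume f: "f \<in> linfty B"
      have Qf: "Q f \<in> linfty B"
        using Q f poly_in_linfty[OF assms(1) fJ] unfolding isproj_def B_def by blast
      have "supnorm B (Q' f) \<le> supnorm B (Q f)"
        unfolding Q'_def B_def by (rule Eop_sup[OF assms(1)]) (use Qf B_def in auto)
      also have "\<dots> \<le> C * supnorm B f" using Q f unfolding isproj_def by blast
      finally show "supnorm B (Q' f) \<le> C * supnorm B f" .
    qed
    then show "C \<in> PS B (poly_space n N (Jk n J k))" using C0 unfolding PS_def by blast
  qed
  have ne: "PS B (poly_space n N J) \<noteq> {}" using PS_ne[OF assms(1-3)] B_def by simp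
  show ?thesis unfolding lambdaP_def proj_const_PS B_def[symmetric]
    by (rule cInf_superset_mono[OF ne PS_bdd sub])
qed

lemma sum_polyf:
  assumes "finite J" "\<forall>\<alpha>\<in>J. mdeg n \<alpha> \<le> m"
  shows "(\<lambda>z. \<Sum>k\<le>m. polyf n N (c k) (Jk n J k) z) = polyf n N (\<lambda>\<alpha>. c (mdeg n \<alpha>) \<alpha>) J"
proof (rule ext)
  fix z
  show "(\<Sum>k\<le>m. polyf n N (c k) (Jk n J k) z) = polyf n N (\<lambda>\<alpha>. c (mdeg n \<alpha>) \<alpha>) J z"
  proof (cases "z \<in> unit_ball n N")
    case False then show ?thesis by (simp add: polyf_def)
  next
    case True
    have "(\<Sum>k\<le>m. polyf n N (c k) (Jk n J k) z)
        = (\<Sum>k\<le>m. \<Sum>\<alpha>\<in>J. if mdeg n \<alpha> = k then c k \<alpha> * monom n \<alpha> z else 0)"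
      using True assms(1) by (simp add: polyf_def Jk_def sum.inter_filter)
    also have "\<dots> = (\<Sum>\<alpha>\<in>J. \<Sum>k\<le>m. if mdeg n \<alpha> = k then c k \<alpha> * monom n \<alpha> z else 0)"
      by (rule sum.swap)
    also have "\<dots> = (\<Sum>\<alpha>\<in>J. c (mdeg n \<alpha>) \<alpha> * monom n \<alpha> z)"
      by (rule sum.cong[OF refl]) (use assms(2) in \<open>simp add: sum.delta\<close>)
    finally show ?thesis using True by (simp add: polyf_def)
  qed
qed

lemma upper_bound:
  assumes nN: "norm_on n N" and J: "J \<subseteq> mindex n" "\<forall>\<alpha>\<in>J. mdeg n \<alpha> \<le> m"
  shows "lambdaP n N J \<le> real (m + 1) * Max ((\<lambda>k. lambdaP n N (Jk n J k)) ` {0..m})"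
proof -
  define B where "B = unit_ball n N"
  define M where "M = Max ((\<lambda>k. lambdaP n N (Jk n J k)) ` {0..m})"
  have fJ: "finite J" by (rule finite_J[OF J])
  have lk: "lambdaP n N (Jk n J k) \<le> M" if "k \<le> m" for k
    unfolding M_def by (rule Max_ge) (use that in auto)
  have Bne: "B \<noteq> {}" using zero_in_B[OF nN] B_def by auto
  show ?thesis
  proof (rule field_le_epsilon)
    fix e :: real assume e: "e > 0"
    define eps where "eps = e / real (m + 1)"
    have eps: "eps > 0" using e by (simp add: eps_def)
    have ex: "\<forall>k. \<exists>QC. k \<le> m \<longrightarrow> 0 \<le> snd QC \<and> isproj B (poly_space n N (Jk n J k)) (fst QC) (snd QC)
               \<and> snd QC < lambdaP n N (Jk n J k) + eps"
    proof
      fix k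
      show "\<exists>QC. k \<le> m \<longrightarrow> 0 \<le> snd QC \<and> isproj B (poly_space n N (Jk n J k)) (fst QC) (snd QC)
               \<and> snd QC < lambdaP n N (Jk n J k) + eps"
      proof -
        have ne: "PS B (poly_space n N (Jk n J k)) \<noteq> {}"
          using PS_ne[OF nN Jk_props[OF J]] B_def by simp
        have "Inf (PS B (poly_space n N (Jk n J k))) < lambdaP n N (Jk n J k) + eps"
          using eps by (simp add: lambdaP_def proj_const_PS B_def)
        then obtain C where "C \<in> PS B (poly_space n N (Jk n J k))" "C < lambdaP n N (Jk n J k) + eps"
          using cInf_lessD[OF ne] by blast
        then obtain Q where "0 \<le> C" "isproj B (poly_space n N (Jk n J k)) Q C" "C < lambdaP n N (Jk n J k) + eps"
          unfolding PS_def by blast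
        then show ?thesis by (intro exI[of _ "(Q, C)"]) simp
      qed
    qed
    obtain F where F: "\<And>k. k \<le> m \<Longrightarrow> 0 \<le> snd (F k) \<and> isproj B (poly_space n N (Jk n J k)) (fst (F k)) (snd (F k))
               \<and> snd (F k) < lambdaP n N (Jk n J k) + eps"
      using choice[OF ex] by blast
    define QQ where "QQ = (\<lambda>k. fst (F k))"
    define CC where "CC = (\<lambda>k. snd (F k))"
    have CC0: "k \<le> m \<Longrightarrow> 0 \<le> CC k" for k using F CC_def by blast
    have CCl: "k \<le> m \<Longrightarrow> CC k < lambdaP n N (Jk n J k) + eps" for k using F CC_def by blast
    have QQ: "k \<le> m \<Longrightarrow> isproj B (poly_space n N (Jk n J k)) (QQ k) (CC k)" for k
      using F CC_def QQ_def by blast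
    have QQ1: "k \<le> m \<Longrightarrow> f \<in> linfty B \<Longrightarrow> QQ k f \<in> poly_space n N (Jk n J k)" for k f
      using QQ unfolding isproj_def by blast
    have QQ2: "k \<le> m \<Longrightarrow> f \<in> linfty B \<Longrightarrow> g \<in> linfty B \<Longrightarrow> QQ k (\<lambda>z. f z + g z) = (\<lambda>z. QQ k f z + QQ k g z)" for k f g
      using QQ unfolding isproj_def by blast
    have QQ3: "k \<le> m \<Longrightarrow> f \<in> linfty B \<Longrightarrow> QQ k (\<lambda>z. c * f z) = (\<lambda>z. c * QQ k f z)" for k f c
      using QQ unfolding isproj_def by blast
    have QQ4: "k \<le> m \<Longrightarrow> y \<in> poly_space n N (Jk n J k) \<Longrightarrow> QQ k y = y" for k y
      using QQ unfolding isproj_def by blast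
    have QQ5: "k \<le> m \<Longrightarrow> f \<in> linfty B \<Longrightarrow> supnorm B (QQ k f) \<le> CC k * supnorm B f" for k f
      using QQ unfolding isproj_def by blast
    have EL: "f \<in> linfty B \<Longrightarrow> Eop (Suc m) k f \<in> linfty B" for f k
      using Eop_linfty[OF nN] B_def by simp
    define Q where "Q = (\<lambda>f z. \<Sum>k\<le>m. QQ k (Eop (Suc m) k f) z)"
    have "isproj B (poly_space n N J) Q (\<Sum>k\<le>m. CC k)"
      unfolding isproj_def
    proof (intro conjI ballI allI)
      fix f assume f: "f \<in> linfty B"
      have "\<forall>k. \<exists>c. k \<le> m \<longrightarrow> QQ k (Eop (Suc m) k f) = polyf n N c (Jk n J k)"
        using QQ1[OF _ EL[OF f]] unfolding poly_space_eq by blast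
      then obtain c where c: "\<And>k. k \<le> m \<Longrightarrow> QQ k (Eop (Suc m) k f) = polyf n N (c k) (Jk n J k)"
        using choice by metis
      have "Q f = (\<lambda>z. \<Sum>k\<le>m. polyf n N (c k) (Jk n J k) z)"
        unfolding Q_def by (rule ext, rule sum.cong) (auto simp: c)
      also have "\<dots> = polyf n N (\<lambda>\<alpha>. c (mdeg n \<alpha>) \<alpha>) J" by (rule sum_polyf[OF fJ J(2)])
      finally show "Q f \<in> poly_space n N J" using polyf_in by simp
    next
      fix f g assume f: "f \<in> linfty B" and g: "g \<in> linfty B"
      show "Q (\<lambda>z. f z + g z) = (\<lambda>z. Q f z + Q g z)"
        unfolding Q_def Eop_add
        by (rule ext) (simp add: QQ2[OF _ EL[OF f] EL[OF g]] sum.distrib)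
    next
      fix f c assume f: "f \<in> linfty B"
      show "Q (\<lambda>z. c * f z) = (\<lambda>z. c * Q f z)"
        unfolding Q_def Eop_smult
        by (rule ext) (simp add: QQ3[OF _ EL[OF f]] sum_distrib_left)
    next
      fix y assume "y \<in> poly_space n N J"
      then obtain c where y: "y = polyf n N c J" unfolding poly_space_eq by blast
      have "Q y = (\<lambda>z. \<Sum>k\<le>m. polyf n N c (Jk n J k) z)"
        unfolding Q_def
      proof (rule ext, rule sum.cong[OF refl])
        fix z k assume "k \<in> {..m}"
        then have k: "k \<le> m" by simp
        have "Eop (Suc m) k y = polyf n N c (Jk n J k)" unfolding y by (rule Eop_poly[OF nN fJ J(2) k])
        then show "QQ k (Eop (Suc m) k y) z = polyf n N c (Jk n J k) z" using QQ4[OF k] polyf_in by simp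
      qed
      also have "\<dots> = polyf n N (\<lambda>\<alpha>. c \<alpha>) J" using sum_polyf[OF fJ J(2), of N "\<lambda>_. c"] by simp
      finally show "Q y = y" using y by simp
    next
      fix f assume f: "f \<in> linfty B"
      show "supnorm B (Q f) \<le> (\<Sum>k\<le>m. CC k) * supnorm B f"
      proof (rule sup_least[OF Bne])
        fix z assume z: "z \<in> B"
        have "cmod (Q f z) \<le> (\<Sum>k\<le>m. cmod (QQ k (Eop (Suc m) k f) z))"
          unfolding Q_def by (rule norm_sum)
        also have "\<dots> \<le> (\<Sum>k\<le>m. CC k * supnorm B f)"
        proof (rule sum_mono)
          fix k assume "k \<in> {..m}"
          then have k: "k \<le> m" by simp
          have inl: "QQ k (Eop (Suc m) k f) \<in> linfty B"
            using poly_in_linfty[OF nN _ QQ1[OF k EL[OF f]]] finite_subset[OF Jk_sub fJ] B_def by simp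
          have "cmod (QQ k (Eop (Suc m) k f) z) \<le> supnorm B (QQ k (Eop (Suc m) k f))"
            by (rule sup_upper[OF inl z])
          also have "\<dots> \<le> CC k * supnorm B (Eop (Suc m) k f)" by (rule QQ5[OF k EL[OF f]])
          also have "\<dots> \<le> CC k * supnorm B f"
            by (rule mult_left_mono[OF _ CC0[OF k]]) (use Eop_sup[OF nN, of f] f B_def in simp)
          finally show "cmod (QQ k (Eop (Suc m) k f) z) \<le> CC k * supnorm B f" .
        qed
        also have "\<dots> = (\<Sum>k\<le>m. CC k) * supnorm B f" by (simp add: sum_distrib_right)
        finally show "cmod (Q f z) \<le> (\<Sum>k\<le>m. CC k) * supnorm B f" .
      qed
    qed
    then have inPS: "(\<Sum>k\<le>m. CC k) \<in> PS B (poly_space n N J)"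
      unfolding PS_def using CC0 by (auto intro: sum_nonneg)
    have "lambdaP n N J \<le> (\<Sum>k\<le>m. CC k)"
      unfolding lambdaP_def proj_const_PS B_def[symmetric] by (rule cInf_lower[OF inPS PS_bdd])
    also have "\<dots> \<le> (\<Sum>k\<le>m. M + eps)"
      by (rule sum_mono) (use CCl lk in \<open>fastforce\<close>)
    also have "\<dots> = real (m + 1) * M + e" using e by (simp add: eps_def field_simps)
    finally show "lambdaP n N J \<le> real (m + 1) * Max ((\<lambda>k. lambdaP n N (Jk n J k)) ` {0..m}) + e"
      by (simp add: M_def)
  qed
qed

lemma lambda_ge1:
  assumes nN: "norm_on n N" and J: "J \<subseteq> mindex n" "\<forall>\<alpha>\<in>J. mdeg n \<alpha> \<le> m" and a0: "\<alpha>0 \<in> J"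
  shows "1 \<le> lambdaP n N J"
proof -
  define B where "B = unit_ball n N"
  have fJ: "finite J" by (rule finite_J[OF J])
  obtain r where r: "r > 0" "\<forall>z\<in>Cn n. (\<forall>i<n. cmod (z i) \<le> r) \<longrightarrow> z \<in> unit_ball n N"
    using small_in_B[OF nN] by blast
  define z0 where "z0 = (\<lambda>i. if i < n then complex_of_real r else 0)"
  have z0B: "z0 \<in> B" using r unfolding B_def by (auto simp: z0_def Cn_def)
  define y where "y = polyf n N (\<lambda>\<alpha>. if \<alpha> = \<alpha>0 then 1 else 0) J"
  have yY: "y \<in> poly_space n N J" unfolding y_def by (rule polyf_in)
  have yL: "y \<in> linfty B" using poly_in_linfty[OF nN fJ yY] B_def by simp
  have "y z0 = monom n \<alpha>0 z0"
    using z0B a0 fJ by (simp add: y_def polyf_def B_def if_distrib[of "\<lambda>x. x * _"] sum.delta cong: if_cong)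
  also have "\<dots> = (\<Prod>i<n. complex_of_real r ^ \<alpha>0 i)" unfolding monom_def z0_def by (rule prod.cong) auto
  finally have "y z0 \<noteq> 0" using r(1) by simp
  then have "0 < cmod (y z0)" by simp
  also have "\<dots> \<le> supnorm B y" by (rule sup_upper[OF yL z0B])
  finally have sp: "supnorm B y > 0" .
  have ne: "PS B (poly_space n N J) \<noteq> {}" using PS_ne[OF nN J] B_def by simp
  show ?thesis unfolding lambdaP_def proj_const_PS B_def[symmetric]
  proof (rule cInf_greatest[OF ne])
    fix C assume "C \<in> PS B (poly_space n N J)"
    then obtain Q where Q: "isproj B (poly_space n N J) Q C" unfolding PS_def by blast
    then have "supnorm B (Q y) \<le> C * supnorm B y" using yL unfolding isproj_def by blast
    moreover have "Q y = y" using Q yY unfolding isproj_def by blast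
    ultimately have "1 * supnorm B y \<le> C * supnorm B y" by simp
    then show "1 \<le> C" using sp by (simp add: mult_le_cancel_right)
  qed
qed

theorem part1:
  assumes "norm_on n N" "J \<subseteq> mindex n" "\<forall>\<alpha>\<in>J. mdeg n \<alpha> \<le> m"
  shows "Max ((\<lambda>k. lambdaP n N (Jk n J k)) ` {0..m}) \<le> lambdaP n N J \<and>
         lambdaP n N J \<le> real (m + 1) * Max ((\<lambda>k. lambdaP n N (Jk n J k)) ` {0..m})"
proof
  show "Max ((\<lambda>k. lambdaP n N (Jk n J k)) ` {0..m}) \<le> lambdaP n N J"
    using lower_one[OF assms] by (subst Max_le_iff) auto
  show "lambdaP n N J \<le> real (m + 1) * Max ((\<lambda>k. lambdaP n N (Jk n J k)) ` {0..m})"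
    by (rule upper_bound[OF assms])
qed

lemma fin_in_X:
  assumes "banach_seq_lattice X NX"
  shows "(\<forall>k\<ge>n. w k = 0) \<Longrightarrow> w \<in> X"
proof (induction n arbitrary: w)
  case 0
  then have "w = (\<lambda>i. 0)" by auto
  then show ?case using assms unfolding banach_seq_lattice_def by simp
next
  case (Suc n)
  define w' where "w' = (\<lambda>k. if k < n then w k else 0)"
  have w'X: "w' \<in> X" by (rule Suc.IH) (simp add: w'_def)
  have e: "(\<lambda>i. if i = n then 1 else 0) \<in> X" using assms unfolding banach_seq_lattice_def by blast
  have sm: "\<And>x c. x \<in> X \<Longrightarrow> (\<lambda>i. c * x i) \<in> X" using assms unfolding banach_seq_lattice_def by blast
  have ad: "\<And>x y. x \<in> X \<Longrightarrow> y \<in> X \<Longrightarrow> (\<lambda>i. x i + y i) \<in> X"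
    using assms unfolding banach_seq_lattice_def by blast
  have "(\<lambda>i. w n * (if i = n then 1 else 0)) \<in> X" by (rule sm[OF e])
  then have "(\<lambda>i. w' i + w n * (if i = n then 1 else 0)) \<in> X"
    by (rule ad[OF w'X])
  moreover have "(\<lambda>i. w' i + w n * (if i = n then 1 else 0)) = w"
  proof
    fix i show "w' i + w n * (if i = n then 1 else 0) = w i"
      using Suc.prems by (cases "i < n"; cases "i = n") (auto simp: w'_def)
  qed
  ultimately show ?case by simp
qed

lemma Xn_norm_on:
  assumes L: "banach_seq_lattice X NX"
  shows "norm_on n (Xn_norm NX n)"
proof -
  define a where "a = (\<lambda>z::nat\<Rightarrow>complex. (\<lambda>k. if k < n then complex_of_real (cmod (z k)) else 0))"
  have aX: "a z \<in> X" for z by (rule fin_in_X[OF L, of n]) (simp add: a_def)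
  have XN: "Xn_norm NX n z = NX (a z)" for z by (simp add: Xn_norm_def a_def)
  have zero: "NX x = 0 \<longleftrightarrow> x = (\<lambda>i. 0)" if "x \<in> X" for x using L that unfolding banach_seq_lattice_def by blast
  have hom: "NX (\<lambda>i. c * x i) = cmod c * NX x" if "x \<in> X" for x c using L that unfolding banach_seq_lattice_def by blast
  have tri: "NX (\<lambda>i. x i + y i) \<le> NX x + NX y" if "x \<in> X" "y \<in> X" for x y
    using L that unfolding banach_seq_lattice_def by blast
  have ideal: "\<And>x y. x \<in> X \<Longrightarrow> (\<forall>i. cmod (y i) \<le> cmod (x i)) \<Longrightarrow> y \<in> X \<and> NX y \<le> NX x"
    using L unfolding banach_seq_lattice_def by blast
  show ?thesis unfolding norm_on_def
  proof (intro conjI ballI allI)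
    fix z assume z: "z \<in> Cn n"
    have "a z = (\<lambda>i. 0) \<longleftrightarrow> z = (\<lambda>i. 0)"
    proof
      assume h: "a z = (\<lambda>i. 0)"
      show "z = (\<lambda>i. 0)"
      proof
        fix i show "z i = 0"
        proof (cases "i < n")
          case True then show ?thesis using fun_cong[OF h, of i] by (simp add: a_def)
        next
          case False then show ?thesis using z by (simp add: Cn_def)
        qed
      qed
    qed (simp add: a_def fun_eq_iff)
    then show "(Xn_norm NX n z = 0) = (z = (\<lambda>i. 0))" using zero[OF aX] XN by simp
  next
    fix z c assume z: "z \<in> Cn n"
    have "a (\<lambda>i. c * z i) = (\<lambda>i. complex_of_real (cmod c) * a z i)"
      by (auto simp: a_def norm_mult)
    then show "Xn_norm NX n (\<lambda>i. c * z i) = cmod c * Xn_norm NX n z"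
      using hom[OF aX, of "complex_of_real (cmod c)" z] XN by simp
  next
    fix z w assume "z \<in> Cn n" "w \<in> Cn n"
    have s: "(\<lambda>i. a z i + a w i) \<in> X" by (rule fin_in_X[OF L, of n]) (simp add: a_def)
    have "\<forall>i. cmod (a (\<lambda>i. z i + w i) i) \<le> cmod (a z i + a w i)"
    proof
      fix i
      show "cmod (a (\<lambda>i. z i + w i) i) \<le> cmod (a z i + a w i)"
      proof (cases "i < n")
        case True
        have "cmod (a z i + a w i) = cmod (z i) + cmod (w i)"
          using True by (simp add: a_def of_real_add[symmetric] del: of_real_add)
        then show ?thesis using True norm_triangle_ineq[of "z i" "w i"] by (simp add: a_def)
      qed (simp add: a_def)
    qed
    then have "NX (a (\<lambda>i. z i + w i)) \<le> NX (\<lambda>i. a z i + a w i)" using ideal[OF s] by blast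
    also have "\<dots> \<le> NX (a z) + NX (a w)" by (rule tri[OF aX aX])
    finally show "Xn_norm NX n (\<lambda>i. z i + w i) \<le> Xn_norm NX n z + Xn_norm NX n w" using XN by simp
  qed
qed

lemma Ple_sub: "Ple n m \<subseteq> mindex n" by (auto simp: Ple_def)
lemma Ple_deg: "\<forall>\<alpha>\<in>Ple n m. mdeg n \<alpha> \<le> m" by (auto simp: Ple_def)
lemma Jk_Ple: "k \<le> m \<Longrightarrow> Jk n (Ple n m) k = Peq n k" by (auto simp: Jk_def Ple_def Peq_def)

lemma Peq_ne:
  assumes "n \<ge> 1" shows "(\<lambda>i. if i = 0 then k else 0) \<in> Peq n k"
proof -
  have "(\<Sum>i<n. (if i = 0 then k else 0)) = k" using assms by (simp add: sum.delta)
  then show ?thesis using assms by (auto simp: Peq_def mindex_def mdeg_def)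
qed

lemma ratio_bounds:
  assumes L: "banach_seq_lattice X NX" and n: "n \<ge> 1" and m: "m \<ge> 1"
  shows "1 \<le> lambdaP n (Xn_norm NX n) (Ple n m) powr (1 / real m) /
                 (Max ((\<lambda>k. lambdaP n (Xn_norm NX n) (Peq n k)) ` {0..m})) powr (1 / real m)
      \<and> lambdaP n (Xn_norm NX n) (Ple n m) powr (1 / real m) /
                 (Max ((\<lambda>k. lambdaP n (Xn_norm NX n) (Peq n k)) ` {0..m})) powr (1 / real m)
         \<le> (real m + 1) powr (1 / real m)"
proof -
  define N where "N = Xn_norm NX n"
  have nN: "norm_on n N" unfolding N_def by (rule Xn_norm_on[OF L])
  define Lm where "Lm = lambdaP n N (Ple n m)"
  define M where "M = Max ((\<lambda>k. lambdaP n N (Peq n k)) ` {0..m})"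
  have MM: "Max ((\<lambda>k. lambdaP n N (Jk n (Ple n m) k)) ` {0..m}) = M"
    unfolding M_def by (rule arg_cong[where f = Max], rule image_cong) (auto simp: Jk_Ple)
  have p1: "M \<le> Lm \<and> Lm \<le> real (m + 1) * M"
    using part1[OF nN Ple_sub Ple_deg[of n m]] unfolding MM Lm_def .
  have "1 \<le> lambdaP n N (Peq n 0)"
    by (rule lambda_ge1[OF nN _ _ Peq_ne[OF n]]) (auto simp: Peq_def)
  also have "\<dots> \<le> M" unfolding M_def by (rule Max_ge) auto
  finally have M1: "1 \<le> M" .
  have q1: "1 \<le> Lm / M" using p1 M1 by simp
  have q2: "Lm / M \<le> real m + 1" using p1 M1 by (simp add: field_simps)
  have eq: "Lm powr (1 / real m) / M powr (1 / real m) = (Lm / M) powr (1 / real m)"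
    by (simp add: powr_divide)
  have "1 \<le> (Lm / M) powr (1 / real m)" using powr_mono2[of "1/real m" 1 "Lm/M"] q1 by simp
  moreover have "(Lm / M) powr (1 / real m) \<le> (real m + 1) powr (1 / real m)"
    by (rule powr_mono2) (use q1 q2 in auto)
  ultimately show ?thesis using eq unfolding Lm_def M_def N_def by simp
qed

lemma upper_lim: "(\<lambda>m::nat. root m 2 * root m (real m)) \<longlonglongrightarrow> 1"
  using tendsto_mult[OF LIMSEQ_root_const[of 2] LIMSEQ_root] by simp

lemma upper_le:
  assumes "m \<ge> 1" shows "(real m + 1) powr (1 / real m) \<le> root m 2 * root m (real m)"
proof -
  have "(real m + 1) powr (1 / real m) \<le> (2 * real m) powr (1 / real m)"
    by (rule powr_mono2) (use assms in auto)
  also have "\<dots> = root m 2 * root m (real m)"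
    using assms by (simp add: powr_mult root_powr_inverse)
  finally show ?thesis .
qed

theorem theorem2p4:
  shows "(\<forall>n N J m. norm_on n N \<and> J \<subseteq> mindex n \<and> (\<forall>\<alpha>\<in>J. mdeg n \<alpha> \<le> m) \<longrightarrow>
            Max ((\<lambda>k. lambdaP n N (Jk n J k)) ` {0..m}) \<le> lambdaP n N J \<and>
            lambdaP n N J \<le> real (m + 1) * Max ((\<lambda>k. lambdaP n N (Jk n J k)) ` {0..m}))
       \<and> (\<forall>X NX. banach_seq_lattice X NX \<longrightarrow>
            (\<lambda>m. SUP n\<in>{1..}. lambdaP n (Xn_norm NX n) (Ple n m) powr (1 / real m) /
                 (Max ((\<lambda>k. lambdaP n (Xn_norm NX n) (Peq n k)) ` {0..m})) powr (1 / real m))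
            \<longlonglongrightarrow> 1)"
proof (rule conjI, goal_cases)
  case 1
  show ?case
  proof (intro allI impI)
  fix n N J m
  assume "norm_on n N \<and> J \<subseteq> mindex n \<and> (\<forall>\<alpha>\<in>J. mdeg n \<alpha> \<le> m)"
  then show "Max ((\<lambda>k. lambdaP n N (Jk n J k)) ` {0..m}) \<le> lambdaP n N J \<and>
            lambdaP n N J \<le> real (m + 1) * Max ((\<lambda>k. lambdaP n N (Jk n J k)) ` {0..m})"
    using part1 by blast
  qed
next
  case 2
  show ?case
  proof (intro allI impI)
  fix X NX assume L: "banach_seq_lattice X NX"
  define r where "r = (\<lambda>m n. lambdaP n (Xn_norm NX n) (Ple n m) powr (1 / real m) /
                 (Max ((\<lambda>k. lambdaP n (Xn_norm NX n) (Peq n k)) ` {0..m})) powr (1 / real m))"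
  have b: "1 \<le> r m n \<and> r m n \<le> (real m + 1) powr (1 / real m)" if "m \<ge> 1" "n \<ge> 1" for m n
    unfolding r_def by (rule ratio_bounds[OF L that(2) that(1)])
  have S: "1 \<le> (SUP n\<in>{1..}. r m n) \<and> (SUP n\<in>{1..}. r m n) \<le> root m 2 * root m (real m)"
    if m: "m \<ge> 1" for m
  proof
    have bdd: "bdd_above (r m ` {1..})" using b[OF m] by (auto intro!: bdd_aboveI)
    show "1 \<le> (SUP n\<in>{1..}. r m n)"
      by (rule cSUP_upper2[OF bdd, of 1]) (use b[OF m] in auto)
    have "(SUP n\<in>{1..}. r m n) \<le> (real m + 1) powr (1 / real m)"
      by (rule cSUP_least) (use b[OF m] in auto)
    also have "\<dots> \<le> root m 2 * root m (real m)" by (rule upper_le[OF m])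
    finally show "(SUP n\<in>{1..}. r m n) \<le> root m 2 * root m (real m)" .
  qed
  have "(\<lambda>m. SUP n\<in>{1..}. r m n) \<longlonglongrightarrow> 1"
  proof (rule tendsto_sandwich[OF _ _ tendsto_const upper_lim])
    show "\<forall>\<^sub>F m in sequentially. 1 \<le> (SUP n\<in>{1..}. r m n)"
      using S by (intro eventually_sequentiallyI[of 1]) blast
    show "\<forall>\<^sub>F m in sequentially. (SUP n\<in>{1..}. r m n) \<le> root m 2 * root m (real m)"
      using S by (intro eventually_sequentiallyI[of 1]) blast
  qed
  then show "(\<lambda>m. SUP n\<in>{1..}. lambdaP n (Xn_norm NX n) (Ple n m) powr (1 / real m) /
                 (Max ((\<lambda>k. lambdaP n (Xn_norm NX n) (Peq n k)) ` {0..m})) powr (1 / real m))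
            \<longlonglongrightarrow> 1" unfolding r_def .
  qed
qed

end
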